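(* Let $\mathcal{D}$ be a DCR graph and let $P$ be any process reachable from $\textsc{dcrpsi}(\mathcal{D})$ by a finite sequence of $\tau$-transitions in the unit context $\mathbf{1}$. Then every unguarded output prefix of $P$ (an output prefix not occurring underneath an input prefix, an output prefix, a $\mathbf{case}$ guard or a replication) has the form $\overline{m}\langle N\rangle.\mathbf{0}$ with the sent message $N$ equal to the frame $\mathcal{F}(P)$.
   Context: A DCR graph is a tuple $(E,M,\to\!\bullet,\bullet\!\to,\to\!\diamond,\to\!+,\to\!\%)$ where $E$ is a set of events (names from a nominal set), $M=(Ex',Re',In')$ is a triple of subsets of $E$ (the marking), and $\to\!\bullet,\bullet\!\to,\to\!\diamond,\to\!+,\to\!\%\subseteq E\times E$ are the condition, response, milestone, include and exclude relations. For a relation $\to$ write $e\!\to=\{f\mid e\to f\}$ and $\to\! e=\{f\mid f\to e\}$. dcrPsi instance: assertions are quadruples $(Ex,Re,In,G)$ with $Ex,Re,In\subseteq E$ and $G$ a natural number built from $0$ and successor $s(\cdot)$; terms are a distinguished channel name $m$ and assertions; conditions are triples $(Co,Mi,e)$ with $Co,Mi\subseteq E$, $e\in E$; channel equality is $=$; unit $\mathbf{1}=(\emptyset,\emptyset,\emptyset,0)$; composition: $(Ex,Re,In,G)\otimes(Ex',Re',In',G')$ equals the first argument if $G>G'$, the second if $G<G'$, and $(Ex\cup Ex',Re\cup Re',In\cup In',G)$ if $G=G'$; entailment: $(Ex,Re,In,G)\vdash(Co,Mi,e)$ iff $e\in In$, $In\cap Co\subseteq Ex$ and $In\cap Mi\cap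 Re=\emptyset$. Psi-calculus: processes $\mathbf{0}$, $(\!|\Psi|\!)$, $\overline{M}\langle N\rangle.P$, $\underline{M}(\lambda\tilde x)N.P$, $\mathbf{case}\ \tilde\varphi:\tilde P$, $P\mid Q$, $!P$. Frames: $\mathcal{F}((\!|\Psi|\!))=\Psi$, $\mathcal{F}(P\mid Q)=\mathcal{F}(P)\otimes\mathcal{F}(Q)$, frame of $\mathbf{0}$, prefixed, case and replicated processes is $\mathbf{1}$. Transitions $\Psi\triangleright P\xrightarrow{\alpha}P'$ are generated by: (Out) if $\Psi\vdash M\leftrightarrow K$ then $\Psi\triangleright\overline{M}\langle N\rangle.P\xrightarrow{\overline{K}N}P$; (In) if $\Psi\vdash M\leftrightarrow K$ then $\Psi\triangleright\underline{M}(\lambda\tilde y)N.P\xrightarrow{\underline{K}N[\tilde y:=\tilde L]}P[\tilde y:=\tilde L]$ for any terms $\tilde L$; (Case) if $\Psi\triangleright P_i\xrightarrow{\alpha}P'$ and $\Psi\vdash\varphi_i$ then $\Psi\triangleright\mathbf{case}\ \tilde\varphi:\tilde P\xrightarrow{\alpha}P'$; (Par) if $\Psi\otimes\mathcal{F}(Q)\triangleright P\xrightarrow{\alpha}P'$ then $\Psi\triangleright P\mid Q\xrightarrow{\alpha}P'\mid Q$, and symmetrically; (Rep) if $\Psi\triangleright P\mid !P\xrightarrow{\alpha}P'$ then $\Psi\triangleright !P\xrightarrow{\alpha}P'$; (Com) if $\mathcal{F}(P)=\Psi_P$, $\mathcal{F}(Q)=\Psi_Q$, $\Psi_Q\otimes\Psi\triangleright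 P\xrightarrow{\overline{M}N}P'$, $\Psi_P\otimes\Psi\triangleright Q\xrightarrow{\underline{K}N}Q'$ and $\Psi_Q\otimes\Psi_P\otimes\Psi\vdash M\leftrightarrow K$, then $\Psi\triangleright P\mid Q\xrightarrow{\tau}P'\mid Q'$, and symmetrically. Assertion processes and $\mathbf{0}$ have no transitions. Set-expressions in terms are identified with their values after substitution. Translation: $\textsc{dcrpsi}(\mathcal{D})=P_s\mid\big|_{e\in E}P_e$ with $P_s=(\!|(Ex',Re',In',0)|\!)\mid\overline{m}\langle(Ex',Re',In',0)\rangle.\mathbf{0}$ and $P_e=!\big(\mathbf{case}\ \varphi_e:\underline{m}(\lambda X_E,X_R,X_I,X_G)(X_E,X_R,X_I,X_G).(\overline{m}\langle U_e\rangle.\mathbf{0}\mid(\!|U_e|\!))\big)$, where $U_e=(X_E\cup\{e\},(X_R\setminus\{e\})\cup e\!\bullet\!\!\to,(X_I\setminus e\!\to\!\%)\cup e\!\to\!+,s(X_G))$ and $\varphi_e=(\to\!\bullet e,\to\!\diamond e,e)$. *)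

theory Defs
  imports Main
begin

record 'e dcr =
  events :: "'e set"
  mEx :: "'e set"
  mRe :: "'e set"
  mIn :: "'e set"
  condr :: "('e \<times> 'e) set"   (* f \<rightarrow>\<bullet> e  as (f,e) *)
  respr :: "('e \<times> 'e) set"   (* e \<bullet>\<rightarrow> f  as (e,f) *)
  milesr :: "('e \<times> 'e) set"  (* f \<rightarrow>\<diamond> e as (f,e) *)
  inclr :: "('e \<times> 'e) set"   (* e \<rightarrow>+ f as (e,f) *)
  exclr :: "('e \<times> 'e) set"   (* e \<rightarrow>% f as (e,f) *)

definition wf_dcr :: "'e dcr \<Rightarrow> bool" where
  "wf_dcr D \<longleftrightarrow> finite (events D)
     \<and> mEx D \<subseteq> events D \<and> mRe D \<subseteq> events D \<and> mIn D \<subseteq> events D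
     \<and> condr D \<subseteq> events D \<times> events D \<and> respr D \<subseteq> events D \<times> events D
     \<and> milesr D \<subseteq> events D \<times> events D \<and> inclr D \<subseteq> events D \<times> events D
     \<and> exclr D \<subseteq> events D \<times> events D"

definition succs :: "('e \<times> 'e) set \<Rightarrow> 'e \<Rightarrow> 'e set" where
  "succs r e = {f. (e, f) \<in> r}"

definition preds :: "('e \<times> 'e) set \<Rightarrow> 'e \<Rightarrow> 'e set" where
  "preds r e = {f. (f, e) \<in> r}"

text \<open>Assertions (Xe, Rr, Ii, G).\<close>
type_synonym 'e asn = "'e set \<times> 'e set \<times> 'e set \<times> nat"

datatype 'e tm = ChanM | Asrt "'e asn"

text \<open>Conditions (Co, Mi, e).\<close>
type_synonym 'e cnd = "'e set \<times> 'e set \<times> 'e"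

definition unit_asn :: "'e asn" where
  "unit_asn = ({}, {}, {}, 0)"

fun comp_asn :: "'e asn \<Rightarrow> 'e asn \<Rightarrow> 'e asn" where
  "comp_asn (Xe, Rr, Ii, G) (Xe', Rr', Ii', G') =
     (if G > G' then (Xe, Rr, Ii, G)
      else if G < G' then (Xe', Rr', Ii', G')
      else (Xe \<union> Xe', Rr \<union> Rr', Ii \<union> Ii', G))"

fun entails :: "'e asn \<Rightarrow> 'e cnd \<Rightarrow> bool" where
  "entails (Xe, Rr, Ii, G) (Co, Mi, e) \<longleftrightarrow>
     e \<in> Ii \<and> Ii \<inter> Co \<subseteq> Xe \<and> Ii \<inter> Mi \<inter> Rr = {}"

definition chaneq :: "'e asn \<Rightarrow> 'e tm \<Rightarrow> 'e tm \<Rightarrow> bool" where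
  "chaneq \<Psi> M K \<longleftrightarrow> M = K"

text \<open>An input \<open>Inp M N P\<close> binds the tuple of variables \<open>(X_E,X_R,X_I,X_G)\<close>;
  the pattern \<open>N\<close> and continuation \<open>P\<close> are given as functions of the values
  substituted for these variables (set expressions identified with their values).\<close>
datatype 'e proc =
    PNil
  | PAss "'e asn"
  | POut "'e tm" "'e tm" "'e proc"
  | PInp "'e tm" "'e asn \<Rightarrow> 'e tm" "'e asn \<Rightarrow> 'e proc"
  | PCase "('e cnd \<times> 'e proc) list"
  | PPar "'e proc" "'e proc"
  | PRep "'e proc"

fun frame :: "'e proc \<Rightarrow> 'e asn" where
  "frame (PAss \<Psi>) = \<Psi>"
| "frame (PPar P Q) = comp_asn (frame P) (frame Q)"
| "frame _ = unit_asn"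

datatype 'e act = AOut "'e tm" "'e tm" | AInp "'e tm" "'e tm" | ATau

inductive trans :: "'e asn \<Rightarrow> 'e proc \<Rightarrow> 'e act \<Rightarrow> 'e proc \<Rightarrow> bool" where
  Out: "chaneq \<Psi> M K \<Longrightarrow> trans \<Psi> (POut M N P) (AOut K N) P"
| In: "chaneq \<Psi> M K \<Longrightarrow> trans \<Psi> (PInp M N P) (AInp K (N L)) (P L)"
| Case: "i < length cs \<Longrightarrow> trans \<Psi> (snd (cs ! i)) \<alpha> P' \<Longrightarrow> entails \<Psi> (fst (cs ! i))
         \<Longrightarrow> trans \<Psi> (PCase cs) \<alpha> P'"
| ParL: "trans (comp_asn \<Psi> (frame Q)) P \<alpha> P' \<Longrightarrow> trans \<Psi> (PPar P Q) \<alpha> (PPar P' Q)"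
| ParR: "trans (comp_asn \<Psi> (frame P)) Q \<alpha> Q' \<Longrightarrow> trans \<Psi> (PPar P Q) \<alpha> (PPar P Q')"
| Rep: "trans \<Psi> (PPar P (PRep P)) \<alpha> P' \<Longrightarrow> trans \<Psi> (PRep P) \<alpha> P'"
| ComL: "trans (comp_asn (frame Q) \<Psi>) P (AOut M N) P'
         \<Longrightarrow> trans (comp_asn (frame P) \<Psi>) Q (AInp K N) Q'
         \<Longrightarrow> chaneq (comp_asn (comp_asn (frame Q) (frame P)) \<Psi>) M K
         \<Longrightarrow> trans \<Psi> (PPar P Q) ATau (PPar P' Q')"
| ComR: "trans (comp_asn (frame P) \<Psi>) Q (AOut M N) Q'
         \<Longrightarrow> trans (comp_asn (frame Q) \<Psi>) P (AInp K N) P'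
         \<Longrightarrow> chaneq (comp_asn (comp_asn (frame P) (frame Q)) \<Psi>) M K
         \<Longrightarrow> trans \<Psi> (PPar P Q) ATau (PPar P' Q')"

definition tau_reach :: "'e proc \<Rightarrow> 'e proc \<Rightarrow> bool" where
  "tau_reach = (\<lambda>P Q. trans unit_asn P ATau Q)\<^sup>*\<^sup>*"

fun unguarded_outputs :: "'e proc \<Rightarrow> ('e tm \<times> 'e tm \<times> 'e proc) set" where
  "unguarded_outputs (POut M N Q) = {(M, N, Q)}"
| "unguarded_outputs (PPar P Q) = unguarded_outputs P \<union> unguarded_outputs Q"
| "unguarded_outputs _ = {}"

fun bigpar :: "'e proc list \<Rightarrow> 'e proc" where
  "bigpar [] = PNil"
| "bigpar [P] = P"
| "bigpar (P # Ps) = PPar P (bigpar Ps)"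

definition U_upd :: "'e dcr \<Rightarrow> 'e \<Rightarrow> 'e asn \<Rightarrow> 'e asn" where
  "U_upd D e X = (case X of (XE, XR, XI, XG) \<Rightarrow>
     (XE \<union> {e}, (XR - {e}) \<union> succs (respr D) e,
      (XI - succs (exclr D) e) \<union> succs (inclr D) e, Suc XG))"

definition phi_e :: "'e dcr \<Rightarrow> 'e \<Rightarrow> 'e cnd" where
  "phi_e D e = (preds (condr D) e, preds (milesr D) e, e)"

definition P_s :: "'e dcr \<Rightarrow> 'e proc" where
  "P_s D = PPar (PAss (mEx D, mRe D, mIn D, 0))
                (POut ChanM (Asrt (mEx D, mRe D, mIn D, 0)) PNil)"

definition P_e :: "'e dcr \<Rightarrow> 'e \<Rightarrow> 'e proc" where
  "P_e D e = PRep (PCase [(phi_e D e,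
      PInp ChanM (\<lambda>X. Asrt X)
        (\<lambda>X. PPar (POut ChanM (Asrt (U_upd D e X)) PNil) (PAss (U_upd D e X))))])"

text \<open>The parallel composition over E is taken along an enumeration \<open>es\<close> of E.\<close>
definition dcrpsi :: "'e dcr \<Rightarrow> 'e list \<Rightarrow> 'e proc" where
  "dcrpsi D es = PPar (P_s D) (bigpar (map (P_e D) es))"

end

theory Submission
  imports Defs "HOL-Library.Multiset"
begin

definition gG :: "'e asn \<Rightarrow> nat" where "gG X = snd (snd (snd X))"

definition body :: "'e dcr \<Rightarrow> 'e \<Rightarrow> 'e asn \<Rightarrow> 'e proc" where
  "body D e = (\<lambda>X. PPar (POut ChanM (Asrt (U_upd D e X)) PNil) (PAss (U_upd D e X)))"

definition Bc :: "'e dcr \<Rightarrow> 'e \<Rightarrow> ('e cnd \<times> 'e proc) list" where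
  "Bc D e = [(phi_e D e, PInp ChanM (\<lambda>X. Asrt X) (body D e))]"

fun wfp :: "'e dcr \<Rightarrow> 'e proc \<Rightarrow> bool" where
  "wfp D PNil = True"
| "wfp D (PAss _) = True"
| "wfp D (POut M N Q) = (M = ChanM \<and> Q = PNil)"
| "wfp D (PInp _ _ _) = False"
| "wfp D (PCase cs) = (\<exists>e. cs = Bc D e)"
| "wfp D (PPar P Q) = (wfp D P \<and> wfp D Q)"
| "wfp D (PRep Q) = (\<exists>e. Q = PCase (Bc D e))"

fun outm :: "'e proc \<Rightarrow> 'e tm multiset" where
  "outm (POut M N Q) = {#N#}"
| "outm (PPar P Q) = outm P + outm Q"
| "outm _ = {#}"

fun asm :: "'e proc \<Rightarrow> 'e asn multiset" where
  "asm (PAss X) = {#X#}"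
| "asm (PPar P Q) = asm P + asm Q"
| "asm _ = {#}"

definition step_ok :: "'e dcr \<Rightarrow> 'e proc \<Rightarrow> 'e act \<Rightarrow> 'e proc \<Rightarrow> bool" where
 "step_ok D P \<alpha> P' = (case \<alpha> of
    AOut M N \<Rightarrow> M = ChanM \<and> outm P = outm P' + {#N#} \<and> asm P' = asm P
  | AInp K N \<Rightarrow> K = ChanM \<and> (\<exists>e L. N = Asrt L \<and> outm P' = outm P + {#Asrt (U_upd D e L)#}
                \<and> asm P' = asm P + {#U_upd D e L#})
  | ATau \<Rightarrow> (\<exists>e L. outm P + {#Asrt (U_upd D e L)#} = outm P' + {#Asrt L#}
                \<and> asm P' = asm P + {#U_upd D e L#}))"

lemma step_ok_transfer:
  "step_ok D P1 \<alpha> P' \<Longrightarrow> outm P1 = outm P2 \<Longrightarrow> asm P1 = asm P2 \<Longrightarrow> step_ok D P2 \<alpha> P'"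
  unfolding step_ok_def by (metis (no_types))

lemma inp_inv:
  assumes "trans \<Psi> (PInp ChanM (\<lambda>X. Asrt X) (body D e)) \<alpha> P'"
  shows "wfp D P' \<and> step_ok D (PCase (Bc D e)) \<alpha> P'"
  using assms
  by (cases rule: trans.cases) (auto simp: body_def step_ok_def chaneq_def)

lemma trans_inv:
  "trans \<Psi> P \<alpha> P' \<Longrightarrow> wfp D P \<Longrightarrow> wfp D P' \<and> step_ok D P \<alpha> P'"
proof (induction rule: trans.induct)
  case (Out \<Psi> M K N P)
  then show ?case by (auto simp: step_ok_def chaneq_def)
next
  case (In \<Psi> M K N P L)
  then show ?case by simp
next
  case (Case i cs \<Psi> \<alpha> P')
  then obtain e where cs: "cs = Bc D e" by auto
  with Case.hyps(1) have "i = 0" by (simp add: Bc_def)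
  with Case.hyps(2) cs have "trans \<Psi> (PInp ChanM (\<lambda>X. Asrt X) (body D e)) \<alpha> P'"
    by (simp add: Bc_def)
  from inp_inv[OF this] cs show ?case by simp
next
  case (ParL \<Psi> Q P \<alpha> P')
  then show ?case by (cases \<alpha>) (auto simp: step_ok_def add_ac)
next
  case (ParR \<Psi> P Q \<alpha> Q')
  then show ?case by (cases \<alpha>) (auto simp: step_ok_def add_ac)
next
  case (Rep \<Psi> P \<alpha> P')
  then obtain e where "P = PCase (Bc D e)" by auto
  then have "wfp D (PPar P (PRep P))" by auto
  with Rep.IH have "wfp D P' \<and> step_ok D (PPar P (PRep P)) \<alpha> P'" by blast
  moreover have "outm (PPar P (PRep P)) = outm (PRep P)" "asm (PPar P (PRep P)) = asm (PRep P)"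
    using \<open>P = PCase (Bc D e)\<close> by auto
  ultimately show ?case using step_ok_transfer by metis
next
  case (ComL Q \<Psi> P M N P' K Q')
  from ComL.IH ComL.prems obtain e L where
    "wfp D P'" "wfp D Q'" "outm P = outm P' + {#N#}" "asm P' = asm P" "N = Asrt L"
    "outm Q' = outm Q + {#Asrt (U_upd D e L)#}" "asm Q' = asm Q + {#U_upd D e L#}"
    by (auto simp: step_ok_def)
  then have "outm (PPar P Q) + {#Asrt (U_upd D e L)#} = outm (PPar P' Q') + {#Asrt L#}"
    "asm (PPar P' Q') = asm (PPar P Q) + {#U_upd D e L#}" by (simp_all add: add_ac)
  then have "step_ok D (PPar P Q) ATau (PPar P' Q')" unfolding step_ok_def act.case by blast
  with \<open>wfp D P'\<close> \<open>wfp D Q'\<close> show ?case by simp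
next
  case (ComR P \<Psi> Q M N Q' K P')
  from ComR.IH ComR.prems obtain e L where
    "wfp D P'" "wfp D Q'" "outm Q = outm Q' + {#N#}" "asm Q' = asm Q" "N = Asrt L"
    "outm P' = outm P + {#Asrt (U_upd D e L)#}" "asm P' = asm P + {#U_upd D e L#}"
    by (auto simp: step_ok_def)
  then have "outm (PPar P Q) + {#Asrt (U_upd D e L)#} = outm (PPar P' Q') + {#Asrt L#}"
    "asm (PPar P' Q') = asm (PPar P Q) + {#U_upd D e L#}" by (simp_all add: add_ac)
  then have "step_ok D (PPar P Q) ATau (PPar P' Q')" unfolding step_ok_def act.case by blast
  with \<open>wfp D P'\<close> \<open>wfp D Q'\<close> show ?case by simp
qed

definition low :: "nat \<Rightarrow> 'e asn \<Rightarrow> bool" where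
  "low g X = (X = unit_asn \<or> gG X < g)"

lemma comp_low: "low g X \<Longrightarrow> low g Y \<Longrightarrow> low g (comp_asn X Y)"
  by (cases X; cases Y) (auto simp: low_def gG_def unit_asn_def)

lemma comp_top1: "low (gG A) X \<Longrightarrow> comp_asn A X = A"
  by (cases X; cases A) (auto simp: low_def gG_def unit_asn_def)

lemma comp_top2: "low (gG A) X \<Longrightarrow> comp_asn X A = A"
  by (cases X; cases A) (auto simp: low_def gG_def unit_asn_def)

lemma frame_low: "filter_mset (\<lambda>x. g \<le> gG x) (asm P) = {#} \<Longrightarrow> low g (frame P)"
proof (induction P)
  case (PAss x)
  then show ?case by (auto simp: low_def split: if_splits)
next
  case (PPar P1 P2)
  then show ?case by (auto intro: comp_low)
qed (auto simp: low_def)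

lemma frame_top: "filter_mset (\<lambda>x. gG A \<le> gG x) (asm P) = {#A#} \<Longrightarrow> frame P = A"
proof (induction P)
  case (PAss x)
  then show ?case by (auto split: if_splits)
next
  case (PPar P1 P2)
  have "filter_mset (\<lambda>x. gG A \<le> gG x) (asm P1) + filter_mset (\<lambda>x. gG A \<le> gG x) (asm P2) = {#A#}"
    using PPar.prems by simp
  then consider "filter_mset (\<lambda>x. gG A \<le> gG x) (asm P1) = {#A#}" "filter_mset (\<lambda>x. gG A \<le> gG x) (asm P2) = {#}"
    | "filter_mset (\<lambda>x. gG A \<le> gG x) (asm P1) = {#}" "filter_mset (\<lambda>x. gG A \<le> gG x) (asm P2) = {#A#}"
    unfolding union_is_single by blast
  then show ?case
  proof cases
    case 1
    then show ?thesis using PPar.IH(1) frame_low[OF 1(2)] comp_top1 by simp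
  next
    case 2
    then show ?thesis using PPar.IH(2) frame_low[OF 2(1)] comp_top2 by simp
  qed
qed auto

lemma outs_eq: "wfp D P \<Longrightarrow> unguarded_outputs P = (\<lambda>N. (ChanM, N, PNil)) ` set_mset (outm P)"
  by (induction P) auto

definition Inv :: "'e dcr \<Rightarrow> 'e proc \<Rightarrow> bool" where
  "Inv D P = (wfp D P \<and> (\<exists>A. outm P = {#Asrt A#} \<and> filter_mset (\<lambda>x. gG A \<le> gG x) (asm P) = {#A#}
       \<and> (\<forall>x\<in>#asm P. gG x \<le> gG A)))"

lemma bigpar_props: "wfp D (bigpar (map (P_e D) es)) \<and> outm (bigpar (map (P_e D) es)) = {#}
   \<and> asm (bigpar (map (P_e D) es)) = {#}"
  by (induction es rule: induct_list012) (auto simp: P_e_def Bc_def body_def)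

lemma Inv_init: "Inv D (dcrpsi D es)"
  using bigpar_props[of D es]
  by (auto simp: Inv_def dcrpsi_def P_s_def gG_def)

lemma gG_U: "gG (U_upd D e L) = Suc (gG L)"
  by (cases L) (auto simp: U_upd_def gG_def)

lemma Inv_step:
  assumes "Inv D P" "trans unit_asn P ATau P'"
  shows "Inv D P'"
proof -
  from assms(1) obtain A where w: "wfp D P" and o: "outm P = {#Asrt A#}"
    and f: "filter_mset (\<lambda>x. gG A \<le> gG x) (asm P) = {#A#}"
    and a: "\<forall>x\<in>#asm P. gG x \<le> gG A" unfolding Inv_def by blast
  from trans_inv[OF assms(2) w] obtain e L where w': "wfp D P'"
    and o': "{#Asrt A#} + {#Asrt (U_upd D e L)#} = outm P' + {#Asrt L#}"
    and a': "asm P' = asm P + {#U_upd D e L#}"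
    by (auto simp: step_ok_def o)
  have "Asrt L \<in># {#Asrt A#} + {#Asrt (U_upd D e L)#}" using o' by simp
  moreover have "L \<noteq> U_upd D e L" using gG_U[of D e L] by auto
  ultimately have LA: "L = A" by auto
  with o' have o2: "outm P' = {#Asrt (U_upd D e A)#}" by (simp add: add_mset_commute)
  define U where "U = U_upd D e A"
  have gU: "gG U = Suc (gG A)" by (simp add: U_def gG_U)
  have "filter_mset (\<lambda>x. gG U \<le> gG x) (asm P) = {#}"
    using a gU by auto
  then have "filter_mset (\<lambda>x. gG U \<le> gG x) (asm P') = {#U#}"
    using a' LA by (simp add: U_def)
  moreover have "\<forall>x\<in>#asm P'. gG x \<le> gG U" using a a' gU LA U_def by auto
  ultimately show ?thesis unfolding Inv_def using w' o2 U_def by blast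
qed

lemma Inv_reach: "tau_reach P0 P \<Longrightarrow> Inv D P0 \<Longrightarrow> Inv D P"
  unfolding tau_reach_def
  by (induction rule: rtranclp_induct) (auto intro: Inv_step)

theorem mainTheorem7:
  fixes D :: "'e dcr" and es :: "'e list" and P :: "'e proc"
  assumes "wf_dcr D"
    and "distinct es" and "set es = events D"
    and "tau_reach (dcrpsi D es) P"
  shows "\<forall>(M, N, Q) \<in> unguarded_outputs P. M = ChanM \<and> Q = PNil \<and> N = Asrt (frame P)"
proof -
  have "Inv D P" using Inv_reach[OF assms(4) Inv_init] .
  then obtain A where w: "wfp D P" and o: "outm P = {#Asrt A#}"
    and f: "filter_mset (\<lambda>x. gG A \<le> gG x) (asm P) = {#A#}" unfolding Inv_def by blast
  have "frame P = A" using frame_top[OF f] .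
  moreover have "unguarded_outputs P = {(ChanM, Asrt A, PNil)}" using outs_eq[OF w] o by simp
  ultimately show ?thesis by simp
qed

end
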